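(* The subspace $K[I[\infty]]$ of $K[\mathcal{T}[\infty]]$ spanned by increasing trees is a graded Hopf subalgebra of $(K[\mathcal{T}[\infty]],\star,\Delta_{\mathrm s})$: it contains the unit, is closed under $\star$, and $\Delta_{\mathrm s}(K[I[\infty]])\subseteq K[I[\infty]]\otimes K[I[\infty]]$.
   Context: $K$ is a field. A tree is a finite planar rooted tree, degree = number of non-root nodes, $\odot$ the one-node tree. An $n$--tree is a tree of degree $n$ whose non-root nodes are labelled bijectively by $\{1,\dots,n\}$; $\mathcal{T}[\infty]$ is the set of all $n$--trees. An increasing tree is an $n$--tree in which labels strictly increase along every path starting at the root; $I[\infty]$ is the set of increasing trees. Nodes $N(t)$ are ordered by depth-first post-order (subtrees left to right recursively, then the node; root maximal); write $u_1<\dots<u_n$ for non-root nodes. For a set $A$ of non-root nodes, $t_A$ is obtained by deleting non-root nodes outside $A$ (children attached in order to the parent in place of the deleted node), labels kept; $t_{[i,j]}=t_{\{u_h,\dots,u_k\}}$ if $i\le j$ and $[i,j]\cap[n]=[h,k]\ne\emptyset$, else $\odot$. Standardization $\mathrm s(t)$ of an $\mathbb N$-labelled tree with distinct labels relabels by $1,\dots,|t|$ preserving relative order. $\Delta_{\mathrm s}(t)=\sum_{k=0}^n\mathrm s(t_{[1,k]})\otimes\mathrm s(t_{[k+1,n]})$. $w[m]$ adds $m$ to every label. A partition of $u$ of degree $n\ge1$ is an ordered tuple $(u_{[n_0+1,n_1]},\dots,u_{[n_{k-1}+1,n_k]})$, $0=n_0<\dots<n_k=n$; for $P=(u_1,\dots,u_k)$,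 $I(P,t)$ is the set of maps $f$ from blocks to $N(t)$ with $f(u_1)<\dots<f(u_k)$; $t\#_{P,f}u$ identifies the root of each $u_i$ with $f(u_i)$, the root-children of $u_i$ becoming children of $f(u_i)$ to the right of its original children, labels kept; $t* u=\sum_{P,f}t\#_{P,f}u$ ($|u|\ge1$), $t*\odot=t$; $t\star w=t* w[|t|]$. *)

theory Defs
  imports Main HOL.Modules "HOL-Library.Poly_Mapping"
begin

text \<open>A (planar rooted) tree is represented by the ordered list of the subtrees hanging at
  its (unlabelled) root; the one-node tree is the empty list.\<close>

datatype ltree = LN nat "ltree list"

type_synonym tree = "ltree list"

abbreviation one_node :: tree where "one_node \<equiv> []"

fun label :: "ltree \<Rightarrow> nat" where
  "label (LN a ts) = a"

fun post_node :: "ltree \<Rightarrow> nat list" where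
  "post_node (LN a ts) = concat (map post_node ts) @ [a]"

definition post :: "tree \<Rightarrow> nat list" where
  "post t = concat (map post_node t)"

definition degree :: "tree \<Rightarrow> nat" where
  "degree t = length (post t)"

definition is_ntree :: "nat \<Rightarrow> tree \<Rightarrow> bool" where
  "is_ntree n t \<longleftrightarrow> degree t = n \<and> distinct (post t) \<and> set (post t) = {1..n}"

definition labelled_trees :: "tree set" where
  "labelled_trees = {t. \<exists>n. is_ntree n t}"

fun inc_node :: "ltree \<Rightarrow> bool" where
  "inc_node (LN a ts) \<longleftrightarrow> (\<forall>c\<in>set ts. a < label c \<and> inc_node c)"

definition increasing_trees :: "tree set" where
  "increasing_trees = {t. t \<in> labelled_trees \<and> (\<forall>c\<in>set t. inc_node c)}"

fun restr_node :: "nat set \<Rightarrow> ltree \<Rightarrow> ltree list" where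
  "restr_node A (LN a ts) =
     (if a \<in> A then [LN a (concat (map (restr_node A) ts))] else concat (map (restr_node A) ts))"

definition restr :: "nat set \<Rightarrow> tree \<Rightarrow> tree" where
  "restr A t = concat (map (restr_node A) t)"

fun relabel_node :: "(nat \<Rightarrow> nat) \<Rightarrow> ltree \<Rightarrow> ltree" where
  "relabel_node f (LN a ts) = LN (f a) (map (relabel_node f) ts)"

definition relabel :: "(nat \<Rightarrow> nat) \<Rightarrow> tree \<Rightarrow> tree" where
  "relabel f t = map (relabel_node f) t"

definition std :: "tree \<Rightarrow> tree" where
  "std t = relabel (\<lambda>a. Suc (card {b \<in> set (post t). b < a})) t"

definition shift :: "nat \<Rightarrow> tree \<Rightarrow> tree" where
  "shift m t = relabel (\<lambda>a. a + m) t"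

text \<open>t restricted to the post-order positions i+1,...,j (i.e. t_{[i+1,j]}).\<close>
definition seg :: "nat \<Rightarrow> nat \<Rightarrow> tree \<Rightarrow> tree" where
  "seg i j t = restr (set (drop i (take j (post t)))) t"

text \<open>K[T[\<infinity>]] is represented by finitely supported maps, and
  K[T] tensor K[T] by maps on pairs (basis t \<otimes> t' \<mapsto> (t,t')).\<close>

definition vscale :: "'k::field \<Rightarrow> ('a \<Rightarrow>\<^sub>0 'k) \<Rightarrow> ('a \<Rightarrow>\<^sub>0 'k)" where
  "vscale c v = Poly_Mapping.map (\<lambda>x. c * x) v"

definition basis_vec :: "'a \<Rightarrow> ('a \<Rightarrow>\<^sub>0 'k::field)" where
  "basis_vec t = Poly_Mapping.single t 1"

definition lin_ext :: "('a \<Rightarrow> ('b \<Rightarrow>\<^sub>0 'k::field)) \<Rightarrow> ('a \<Rightarrow>\<^sub>0 'k) \<Rightarrow> ('b \<Rightarrow>\<^sub>0 'k)" where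
  "lin_ext f v = (\<Sum>t\<in>Poly_Mapping.keys v. vscale (Poly_Mapping.lookup v t) (f t))"

definition bilin_ext :: "('a \<Rightarrow> 'b \<Rightarrow> ('c \<Rightarrow>\<^sub>0 'k::field)) \<Rightarrow> ('a \<Rightarrow>\<^sub>0 'k) \<Rightarrow> ('b \<Rightarrow>\<^sub>0 'k) \<Rightarrow> ('c \<Rightarrow>\<^sub>0 'k)" where
  "bilin_ext f v w = (\<Sum>t\<in>Poly_Mapping.keys v. \<Sum>u\<in>Poly_Mapping.keys w. vscale (Poly_Mapping.lookup v t * Poly_Mapping.lookup w u) (f t u))"

definition Delta_tree :: "tree \<Rightarrow> ((tree \<times> tree) \<Rightarrow>\<^sub>0 'k::field)" where
  "Delta_tree t = (\<Sum>k\<leftarrow>[0..<Suc (degree t)].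
      basis_vec (std (seg 0 k t), std (seg k (degree t) t)))"

definition Delta_s :: "(tree \<Rightarrow>\<^sub>0 'k::field) \<Rightarrow> ((tree \<times> tree) \<Rightarrow>\<^sub>0 'k)" where
  "Delta_s = lin_ext Delta_tree"

text \<open>Nodes of t are identified by Some label (non-root) or None (root); g x is the
  forest appended to the right of the children of node x.\<close>
fun graft_node :: "(nat option \<Rightarrow> ltree list) \<Rightarrow> ltree \<Rightarrow> ltree" where
  "graft_node g (LN a ts) = LN a (map (graft_node g) ts @ g (Some a))"

definition graft :: "(nat option \<Rightarrow> ltree list) \<Rightarrow> tree \<Rightarrow> tree" where
  "graft g t = map (graft_node g) t @ g None"

definition nodes :: "tree \<Rightarrow> nat option list" where
  "nodes t = map Some (post t) @ [None]"

text \<open>A partition of u is given by the cut list cs = [n_1,...,n_k] (0 < n_1 < ... < n_k = |u|);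
  a map f with f(u_1) < ... < f(u_k) by strictly increasing post-order positions js of nodes of t.\<close>
definition part_data :: "tree \<Rightarrow> tree \<Rightarrow> (nat list \<times> nat list) set" where
  "part_data t u = {(cs, js). cs \<noteq> [] \<and> sorted_wrt (<) cs \<and> set cs \<subseteq> {1..degree u}
      \<and> last cs = degree u \<and> length js = length cs \<and> sorted_wrt (<) js \<and> set js \<subseteq> {0..degree t}}"

text \<open>i-th block (0-based) of the partition cs of u: the forest of root-children of u_{[n_i+1,n_{i+1}]}.\<close>
definition block :: "tree \<Rightarrow> nat list \<Rightarrow> nat \<Rightarrow> tree" where
  "block u cs i = seg ((0 # cs) ! i) (cs ! i) u"

definition graft_pf :: "tree \<Rightarrow> tree \<Rightarrow> nat list \<Rightarrow> nat list \<Rightarrow> tree" where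
  "graft_pf t u cs js =
     graft (\<lambda>x. concat (map (\<lambda>i. if nodes t ! (js ! i) = x then block u cs i else [])
                              [0..<length cs])) t"

definition graft_prod_tree :: "tree \<Rightarrow> tree \<Rightarrow> (tree \<Rightarrow>\<^sub>0 'k::field)" where
  "graft_prod_tree t u =
     (if u = one_node then basis_vec t
      else (\<Sum>(cs, js)\<in>part_data t u. basis_vec (graft_pf t u cs js)))"

definition star_tree :: "tree \<Rightarrow> tree \<Rightarrow> (tree \<Rightarrow>\<^sub>0 'k::field)" where
  "star_tree t w = graft_prod_tree t (shift (degree t) w)"

definition star :: "(tree \<Rightarrow>\<^sub>0 'k::field) \<Rightarrow> (tree \<Rightarrow>\<^sub>0 'k) \<Rightarrow> (tree \<Rightarrow>\<^sub>0 'k)" where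
  "star = bilin_ext star_tree"

definition KI :: "(tree \<Rightarrow>\<^sub>0 'k::field) set" where
  "KI = module.span vscale (basis_vec ` increasing_trees)"

definition KI_tensor_KI :: "((tree \<times> tree) \<Rightarrow>\<^sub>0 'k::field) set" where
  "KI_tensor_KI = module.span vscale
     ((\<lambda>(s, s'). basis_vec (s, s')) ` (increasing_trees \<times> increasing_trees))"

end

theory Submission
  imports Defs "HOL-Library.Multiset"
begin

lemma post_Nil[simp]: "post [] = []" by (simp add: post_def)
lemma post_Cons[simp]: "post (c # ts) = post_node c @ post ts" by (simp add: post_def)
lemma post_append[simp]: "post (xs @ ys) = post xs @ post ys" by (simp add: post_def)
lemma post_concat: "post (concat xss) = concat (map post xss)" by (induct xss) auto
lemma post_node_LN: "post_node (LN a ts) = post ts @ [a]" by (simp add: post_def)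
declare post_node.simps[simp del]

lemma post_restr_node: "post (restr_node A n) = filter (\<lambda>x. x \<in> A) (post_node n)"
proof (induct n)
  case (LN a ts)
  have "post (concat (map (restr_node A) ts)) = filter (\<lambda>x. x \<in> A) (post ts)"
    using LN by (induct ts) auto
  then show ?case by (simp add: post_node_LN)
qed

lemma post_restr: "post (restr A t) = filter (\<lambda>x. x \<in> A) (post t)"
  unfolding restr_def by (induct t) (auto simp: post_restr_node)

lemma label_in_post: "label c \<in> set (post_node c)"
  by (cases c) (simp add: post_node_LN)

lemma root_in_post: "c \<in> set ts \<Longrightarrow> label c \<in> set (post ts)"
  by (induct ts) (auto simp: label_in_post)

lemma inc_LN: "inc_node (LN a ts) \<longleftrightarrow> (\<forall>c\<in>set ts. a < label c) \<and> (\<forall>c\<in>set ts. inc_node c)"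
  by auto
declare inc_node.simps[simp del]

lemma inc_le_post: "inc_node n \<Longrightarrow> x \<in> set (post_node n) \<Longrightarrow> label n \<le> x"
proof (induct n arbitrary: x)
  case (LN a ts)
  show ?case
  proof (cases "x = a")
    case False
    then obtain c where c: "c \<in> set ts" "x \<in> set (post_node c)"
      using LN.prems by (auto simp: post_node_LN post_def)
    then have "label c \<le> x" using LN by (auto simp: inc_LN)
    then show ?thesis using c LN.prems by (auto simp: inc_LN)
  qed simp
qed

lemma inc_restr_node: "inc_node n \<Longrightarrow> \<forall>c\<in>set (restr_node A n). inc_node c"
proof (induct n)
  case (LN a ts)
  have IH: "\<forall>c\<in>set (concat (map (restr_node A) ts)). inc_node c"
    using LN by (auto simp: inc_LN)
  have "\<forall>c\<in>set (concat (map (restr_node A) ts)). a < label c"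
  proof
    fix c assume c: "c \<in> set (concat (map (restr_node A) ts))"
    then obtain d where d: "d \<in> set ts" "c \<in> set (restr_node A d)" by auto
    have "label c \<in> set (post (restr_node A d))" using d root_in_post by blast
    then have "label c \<in> set (post_node d)" by (simp add: post_restr_node)
    then have "label d \<le> label c" using inc_le_post d LN.prems by (auto simp: inc_LN)
    then show "a < label c" using d LN.prems by (auto simp: inc_LN)
  qed
  then show ?case using IH by (auto simp: inc_LN)
qed

lemma inc_restr: "\<forall>c\<in>set t. inc_node c \<Longrightarrow> \<forall>c\<in>set (restr A t). inc_node c"
  unfolding restr_def using inc_restr_node by fastforce

lemma post_relabel_node: "post_node (relabel_node f n) = map f (post_node n)"
proof (induct n)
  case (LN a ts)
  then have "post (map (relabel_node f) ts) = map f (post ts)" by (induct ts) auto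
  then show ?case by (simp add: post_node_LN)
qed

lemma post_relabel: "post (relabel f t) = map f (post t)"
  unfolding relabel_def by (induct t) (auto simp: post_relabel_node)

lemma label_relabel: "label (relabel_node f c) = f (label c)" by (cases c) auto

lemma inc_relabel_node: "inc_node n \<Longrightarrow> strict_mono_on (set (post_node n)) f \<Longrightarrow> inc_node (relabel_node f n)"
proof (induct n)
  case (LN a ts)
  have "\<forall>c\<in>set ts. set (post_node c) \<subseteq> set (post_node (LN a ts))"
    by (auto simp: post_node_LN post_def)
  then have sm: "\<forall>c\<in>set ts. strict_mono_on (set (post_node c)) f"
    using LN.prems(2) unfolding strict_mono_on_def by blast
  have "\<forall>c\<in>set ts. f a < f (label c)"
  proof
    fix c assume c: "c \<in> set ts"
    have "a \<in> set (post_node (LN a ts))" "label c \<in> set (post_node (LN a ts))"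
      using c label_in_post by (auto simp: post_node_LN post_def)
    then show "f a < f (label c)" using LN.prems c by (auto simp: inc_LN strict_mono_on_def)
  qed
  then show ?case using LN sm by (auto simp: inc_LN label_relabel)
qed

lemma inc_relabel: "\<forall>c\<in>set t. inc_node c \<Longrightarrow> strict_mono_on (set (post t)) f \<Longrightarrow> \<forall>c\<in>set (relabel f t). inc_node c"
  unfolding relabel_def
proof (induct t)
  case (Cons c t)
  have "strict_mono_on (set (post_node c)) f" "strict_mono_on (set (post t)) f"
    using Cons.prems(2) unfolding strict_mono_on_def by auto
  then show ?case using inc_relabel_node[of c f] Cons by auto
qed simp


lemma ntree_iff: "is_ntree n t \<longleftrightarrow> distinct (post t) \<and> set (post t) = {1..n}"
  unfolding is_ntree_def degree_def using distinct_card by fastforce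

lemma std_smono:
  fixes S :: "nat set" assumes "finite S"
  shows "strict_mono_on S (\<lambda>a. Suc (card {b \<in> S. b < a}))"
  unfolding strict_mono_on_def
proof (intro allI impI)
  fix x y assume "x \<in> S \<and> y \<in> S \<and> x < y"
  then have xy: "x \<in> S" "y \<in> S" "x < y" by auto
  have "{b \<in> S. b < x} \<subset> {b \<in> S. b < y}" using xy by auto
  then show "Suc (card {b \<in> S. b < x}) < Suc (card {b \<in> S. b < y})"
    using assms by (simp add: psubset_card_mono)
qed

lemma std_image:
  fixes S :: "nat set" assumes "finite S"
  shows "(\<lambda>a. Suc (card {b \<in> S. b < a})) ` S = {1..card S}"
proof -
  let ?f = "\<lambda>a. Suc (card {b \<in> S. b < a})"
  have inj: "inj_on ?f S" using std_smono[OF assms] strict_mono_on_imp_inj_on by blast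
  have sub: "?f ` S \<subseteq> {1..card S}"
  proof
    fix y assume "y \<in> ?f ` S"
    then obtain a where a: "a \<in> S" "y = ?f a" by auto
    have "{b \<in> S. b < a} \<subset> S" using a by auto
    then have "card {b \<in> S. b < a} < card S" using assms by (simp add: psubset_card_mono)
    then show "y \<in> {1..card S}" using a by auto
  qed
  have "card (?f ` S) = card {1..card S}" using inj by (simp add: card_image)
  then show ?thesis using sub by (simp add: card_subset_eq)
qed

lemma std_inc:
  assumes inc: "\<forall>c\<in>set s. inc_node c" and d: "distinct (post s)"
  shows "std s \<in> increasing_trees"
proof -
  let ?S = "set (post s)"
  let ?f = "\<lambda>a. Suc (card {b \<in> ?S. b < a})"
  have sm: "strict_mono_on ?S ?f" by (rule std_smono) simp
  have p: "post (std s) = map ?f (post s)" unfolding std_def by (simp add: post_relabel)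
  have "distinct (post (std s))" unfolding p using d sm strict_mono_on_imp_inj_on
    by (simp add: distinct_map)
  moreover have "set (post (std s)) = {1..card ?S}" unfolding p using std_image[of ?S] by simp
  ultimately have "is_ntree (card ?S) (std s)" by (simp add: ntree_iff)
  moreover have "\<forall>c\<in>set (std s). inc_node c" unfolding std_def using inc_relabel[OF inc sm] .
  ultimately show ?thesis unfolding increasing_trees_def labelled_trees_def by blast
qed

lemma distinct_restr: "distinct (post t) \<Longrightarrow> distinct (post (restr A t))"
  by (simp add: post_restr)

lemma inc_tree_props: "t \<in> increasing_trees \<Longrightarrow> (\<forall>c\<in>set t. inc_node c) \<and> distinct (post t) \<and> set (post t) = {1..degree t}"
  unfolding increasing_trees_def labelled_trees_def is_ntree_def by auto

lemma seg_inc: "t \<in> increasing_trees \<Longrightarrow> std (seg i j t) \<in> increasing_trees"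
  unfolding seg_def using inc_tree_props std_inc inc_restr distinct_restr by blast


lemma mset_post_graft_node:
  "mset (post_node (graft_node g n)) = mset (post_node n) + sum_list (map (\<lambda>a. mset (post (g (Some a)))) (post_node n))"
proof (induct n)
  case (LN a ts)
  have "mset (post (map (graft_node g) ts)) = mset (post ts) + sum_list (map (\<lambda>a. mset (post (g (Some a)))) (post ts))"
    using LN by (induct ts) auto
  then show ?case by (simp add: post_node_LN)
qed

lemma mset_post_graft:
  "mset (post (graft g t)) = mset (post t) + sum_list (map (\<lambda>x. mset (post (g x))) (nodes t))"
proof -
  have "mset (post (map (graft_node g) t)) = mset (post t) + sum_list (map (\<lambda>a. mset (post (g (Some a)))) (post t))"
    by (induct t) (auto simp: mset_post_graft_node)
  then show ?thesis unfolding graft_def nodes_def by (simp add: comp_def)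
qed

lemma label_graft: "label (graft_node g c) = label c" by (cases c) auto

lemma inc_graft_node:
  "inc_node n \<Longrightarrow> (\<forall>a\<in>set (post_node n). \<forall>c\<in>set (g (Some a)). a < label c \<and> inc_node c) \<Longrightarrow> inc_node (graft_node g n)"
proof (induct n)
  case (LN a ts)
  have "\<forall>c\<in>set ts. \<forall>b\<in>set (post_node c). \<forall>d\<in>set (g (Some b)). b < label d \<and> inc_node d"
    using LN.prems(2) by (auto simp: post_node_LN post_def)
  then have "\<forall>c\<in>set ts. inc_node (graft_node g c)" using LN by (auto simp: inc_LN)
  moreover have "\<forall>c\<in>set (g (Some a)). a < label c \<and> inc_node c" using LN.prems(2) by (auto simp: post_node_LN)
  ultimately show ?case using LN.prems(1) by (auto simp: inc_LN label_graft)
qed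

lemma filter_slice: "distinct L \<Longrightarrow> filter (\<lambda>x. x \<in> set (drop i (take j L))) L = drop i (take j L)"
proof -
  assume d: "distinct L"
  define A where "A = take i (take j L)"
  define B where "B = drop i (take j L)"
  define C where "C = drop j L"
  have "L = (A @ B) @ C" unfolding A_def B_def C_def append_take_drop_id by simp
  then have L: "L = A @ B @ C" by simp
  have "distinct (A @ B @ C)" using d L by simp
  then have "set A \<inter> set B = {}" "set B \<inter> set C = {}" by auto
  then have "filter (\<lambda>x. x \<in> set B) A = []" "filter (\<lambda>x. x \<in> set B) C = []" "filter (\<lambda>x. x \<in> set B) B = B"
    by (auto simp: filter_empty_conv)
  then show ?thesis using L B_def by (metis filter_append append_Nil append_Nil2)
qed

lemma slice_app: "p \<le> c \<Longrightarrow> c \<le> d \<Longrightarrow> drop p (take c L) @ drop c (take d L) = drop p (take d (L::'a list))"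
proof -
  assume a: "p \<le> c" "c \<le> d"
  have e: "take d L = take c L @ drop c (take d L)"
    using a by (metis append_take_drop_id min.absorb1 take_take)
  have "p \<le> length (take c L) \<or> drop c (take d L) = []" using a by auto
  then show ?thesis
  proof
    assume "p \<le> length (take c L)"
    then show ?thesis by (subst e) simp
  next
    assume z: "drop c (take d L) = []"
    then show ?thesis by (subst e) (simp add: z)
  qed
qed

lemma concat_slices:
  "cs \<noteq> [] \<Longrightarrow> sorted_wrt (<) cs \<Longrightarrow> p \<le> hd cs \<Longrightarrow>
   concat (map (\<lambda>i. drop ((p#cs)!i) (take (cs!i) L)) [0..<length cs]) = drop p (take (last cs) L)"
proof (induct cs arbitrary: p)
  case (Cons c cs)
  show ?case
  proof (cases "cs = []")
    case True then show ?thesis by simp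
  next
    case False
    have "c < hd cs" using Cons.prems(2) False by (cases cs) auto
    moreover have "hd cs \<le> last cs" using Cons.prems(2) False
      by (cases cs) (auto simp: less_imp_le)
    ultimately have cl: "c \<le> last cs" by simp
    have IH: "concat (map (\<lambda>i. drop ((c#cs)!i) (take (cs!i) L)) [0..<length cs]) = drop c (take (last cs) L)"
      using Cons.hyps[of c] Cons.prems(2) False \<open>c < hd cs\<close> by auto
    have "concat (map (\<lambda>i. drop ((p#c#cs)!i) (take ((c#cs)!i) L)) [0..<length (c#cs)])
        = drop p (take c L) @ drop c (take (last cs) L)"
      by (simp only: length_Cons map_upt_Suc IH[symmetric]) simp
    also have "\<dots> = drop p (take (last cs) L)" using cl Cons.prems(3) slice_app by simp
    finally show ?thesis using False by simp
  qed
qed simp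


lemma graft_inc:
  assumes t: "t \<in> increasing_trees" and w: "w \<in> increasing_trees"
    and pd: "(cs, js) \<in> part_data t (shift (degree t) w)"
  shows "graft_pf t (shift (degree t) w) cs js \<in> increasing_trees"
proof -
  define n where "n = degree t"
  define u where "u = shift n w"
  define m where "m = degree w"
  define L where "L = post u"
  define k where "k = length cs"
  define N where "N = nodes t"
  define B where "B = (\<lambda>i. block u cs i)"
  define g where "g = (\<lambda>x. concat (map (\<lambda>i. if N ! (js ! i) = x then B i else []) [0..<k]))"
  have tp: "\<forall>c\<in>set t. inc_node c" "distinct (post t)" "set (post t) = {1..n}"
    using inc_tree_props[OF t] n_def by auto
  have wp: "\<forall>c\<in>set w. inc_node c" "distinct (post w)" "set (post w) = {1..m}"
    using inc_tree_props[OF w] m_def by auto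
  have Lw: "L = map (\<lambda>a. a + n) (post w)" unfolding L_def u_def shift_def by (simp add: post_relabel)
  have Ld: "distinct L" using wp(2) Lw by (simp add: distinct_map inj_on_def)
  have Ls: "set L = {n+1..n+m}" using wp(3) Lw by (auto simp: image_iff)
  have Llen: "length L = m" using Lw m_def degree_def by simp
  have du: "degree u = m" using Llen L_def degree_def by simp
  have uinc: "\<forall>c\<in>set u. inc_node c" unfolding u_def shift_def
    by (rule inc_relabel[OF wp(1)]) (simp add: strict_mono_on_def)
  from pd have cs: "cs \<noteq> []" "sorted_wrt (<) cs" "set cs \<subseteq> {1..m}" "last cs = m"
    and js: "length js = k" "set js \<subseteq> {0..n}"
    unfolding part_data_def k_def u_def n_def du[unfolded u_def n_def] by auto
  have postB: "post (B i) = drop ((0#cs)!i) (take (cs!i) L)" for i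
    unfolding B_def block_def seg_def post_restr L_def using Ld L_def filter_slice by simp
  have incB: "\<forall>c\<in>set (B i). inc_node c" for i
    unfolding B_def block_def seg_def by (rule inc_restr[OF uinc])
  have labB: "c \<in> set (B i) \<Longrightarrow> label c \<in> set L" for c i
    using root_in_post[of c "B i"] postB[of i] by (auto dest: in_set_dropD in_set_takeD)
  have gp: "\<forall>c\<in>set (g x). inc_node c \<and> label c \<in> set L" for x
    unfolding g_def using incB labB by (auto split: if_splits)
  have eq: "graft_pf t u cs js = graft g t"
    unfolding graft_pf_def g_def N_def B_def k_def ..
  have inc: "\<forall>c\<in>set (graft g t). inc_node c"
  proof
    fix c assume "c \<in> set (graft g t)"
    then consider (a) d where "d \<in> set t" "c = graft_node g d" | (b) "c \<in> set (g None)"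
      unfolding graft_def by auto
    then show "inc_node c"
    proof cases
      case a
      have "\<forall>x\<in>set (post_node d). \<forall>e\<in>set (g (Some x)). x < label e \<and> inc_node e"
      proof (intro ballI)
        fix x e assume x: "x \<in> set (post_node d)" and e: "e \<in> set (g (Some x))"
        have "x \<in> set (post t)" using x a(1) by (induct t) auto
        then have "x \<le> n" using tp(3) by auto
        moreover have "label e \<in> set L" "inc_node e" using gp e by auto
        ultimately show "x < label e \<and> inc_node e" using Ls by auto
      qed
      then show ?thesis using inc_graft_node a tp(1) by auto
    qed (use gp in auto)
  qed
  have dN: "distinct N" unfolding N_def nodes_def using tp(2) by (auto simp: distinct_map)
  have lenN: "length N = Suc n" unfolding N_def nodes_def n_def degree_def by simp
  have mg: "mset (post (g x)) = (\<Sum>i\<in>{0..<k}. if N ! (js ! i) = x then mset (post (B i)) else {#})" for x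
    unfolding g_def post_concat mset_concat
    by (simp add: sum_set_upt_conv_sum_list_nat[symmetric] comp_def if_distrib cong: if_cong)
  have "sum_list (map (\<lambda>x. mset (post (g x))) N) = (\<Sum>x\<in>set N. mset (post (g x)))"
    using dN by (simp add: sum.distinct_set_conv_list)
  also have "\<dots> = (\<Sum>i\<in>{0..<k}. \<Sum>x\<in>set N. if N ! (js ! i) = x then mset (post (B i)) else {#})"
    unfolding mg by (rule sum.swap)
  also have "\<dots> = (\<Sum>i\<in>{0..<k}. mset (post (B i)))"
  proof (rule sum.cong[OF refl])
    fix i assume "i \<in> {0..<k}"
    then have "js ! i \<in> set js" using js(1) by auto
    then have "js ! i < length N" using js(2) lenN by auto
    then have "N ! (js ! i) \<in> set N" by simp
    then show "(\<Sum>x\<in>set N. if N ! (js ! i) = x then mset (post (B i)) else {#}) = mset (post (B i))"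
      by (simp add: sum.delta)
  qed
  also have "\<dots> = mset (concat (map (\<lambda>i. post (B i)) [0..<k]))"
    by (simp add: mset_concat sum_set_upt_conv_sum_list_nat[symmetric] comp_def)
  also have "\<dots> = mset L"
  proof -
    have "concat (map (\<lambda>i. post (B i)) [0..<k]) = drop 0 (take (last cs) L)"
      unfolding postB k_def by (rule concat_slices[OF cs(1,2)]) simp
    then show ?thesis using cs(4) Llen by simp
  qed
  finally have "mset (post (graft g t)) = mset (post t @ L)"
    by (simp add: mset_post_graft N_def)
  moreover have "distinct (post t @ L)" using tp Ld Ls by auto
  moreover have "set (post t @ L) = {1..n+m}" using tp Ls by auto
  ultimately have "distinct (post (graft g t)) \<and> set (post (graft g t)) = {1..n+m}"
    by (metis mset_eq_imp_distinct_iff mset_eq_setD)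
  then have "is_ntree (n+m) (graft g t)" by (simp add: ntree_iff)
  then show ?thesis using inc eq unfolding u_def n_def increasing_trees_def labelled_trees_def by auto
qed


lemma lookup_vscale[simp]: "Poly_Mapping.lookup (vscale c v) k = c * Poly_Mapping.lookup v k"
  unfolding vscale_def by (simp add: Poly_Mapping.map.rep_eq when_def)

interpretation V: module "vscale :: 'k::field \<Rightarrow> ('a \<Rightarrow>\<^sub>0 'k) \<Rightarrow> _"
  by unfold_locales (auto intro!: poly_mapping_eqI simp: lookup_add algebra_simps)

lemma keys_vscale: "Poly_Mapping.keys (vscale c v) \<subseteq> Poly_Mapping.keys v"
  by (auto simp: in_keys_iff)

lemma span_keys:
  "module.span vscale (basis_vec ` S :: ('a \<Rightarrow>\<^sub>0 'k::field) set) \<subseteq> {v. Poly_Mapping.keys v \<subseteq> S}"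
proof (rule V.span_minimal)
  show "basis_vec ` S \<subseteq> {v. Poly_Mapping.keys v \<subseteq> S}" by (auto simp: basis_vec_def)
  show "V.subspace {v:: 'a \<Rightarrow>\<^sub>0 'k. Poly_Mapping.keys v \<subseteq> S}"
    unfolding V.subspace_def using keys_add keys_vscale by fastforce
qed


lemma one_inc: "one_node \<in> increasing_trees"
  unfolding increasing_trees_def labelled_trees_def is_ntree_def degree_def by auto

lemma star_tree_KI:
  assumes t: "t \<in> increasing_trees" and w: "w \<in> increasing_trees"
  shows "(star_tree t w :: tree \<Rightarrow>\<^sub>0 'k::field) \<in> KI"
proof (cases "shift (degree t) w = one_node")
  case True then show ?thesis
    unfolding star_tree_def graft_prod_tree_def KI_def using t by (auto intro: V.span_base)
next
  case False
  show ?thesis unfolding star_tree_def graft_prod_tree_def KI_def using False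
  proof (simp, intro V.span_sum)
    fix x assume x: "x \<in> part_data t (shift (degree t) w)"
    obtain cs js where "x = (cs, js)" by fastforce
    then show "(case x of (cs, js) \<Rightarrow> basis_vec (graft_pf t (shift (degree t) w) cs js))
      \<in> V.span (basis_vec ` increasing_trees)"
      using graft_inc[OF t w] x by (auto intro: V.span_base)
  qed
qed

lemma KI_keys: "v \<in> (KI :: (tree \<Rightarrow>\<^sub>0 'k::field) set) \<Longrightarrow> Poly_Mapping.keys v \<subseteq> increasing_trees"
  unfolding KI_def using span_keys by blast

theorem proposition4p4:
  shows "(basis_vec one_node :: tree \<Rightarrow>\<^sub>0 'k::field) \<in> KI
    \<and> (\<forall>v\<in>(KI :: (tree \<Rightarrow>\<^sub>0 'k) set). \<forall>w\<in>KI. star v w \<in> KI)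
    \<and> (\<forall>v\<in>(KI :: (tree \<Rightarrow>\<^sub>0 'k) set). Delta_s v \<in> KI_tensor_KI)"
proof (intro conjI ballI)
  show "(basis_vec one_node :: tree \<Rightarrow>\<^sub>0 'k::field) \<in> KI"
    unfolding KI_def using one_inc by (auto intro: V.span_base)
next
  fix v w :: "tree \<Rightarrow>\<^sub>0 'k" assume v: "v \<in> KI" and w: "w \<in> KI"
  show "star v w \<in> KI"
    unfolding star_def bilin_ext_def
    using KI_keys[OF v] KI_keys[OF w] star_tree_KI
    unfolding KI_def by (auto intro!: V.span_sum V.span_scale)
next
  fix v :: "tree \<Rightarrow>\<^sub>0 'k" assume v: "v \<in> KI"
  have D: "Delta_tree t \<in> (KI_tensor_KI :: ((tree \<times> tree) \<Rightarrow>\<^sub>0 'k) set)" if t: "t \<in> increasing_trees" for t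
    unfolding Delta_tree_def KI_tensor_KI_def sum_set_upt_conv_sum_list_nat[symmetric]
  proof (rule V.span_sum, rule V.span_base)
    fix k show "basis_vec (std (seg 0 k t), std (seg k (degree t) t))
       \<in> (\<lambda>(s, s'). basis_vec (s, s')) ` (increasing_trees \<times> increasing_trees)"
      using seg_inc[OF t] by force
  qed
  show "Delta_s v \<in> KI_tensor_KI"
    unfolding Delta_s_def lin_ext_def using KI_keys[OF v] D
    unfolding KI_tensor_KI_def by (auto intro!: V.span_sum V.span_scale)
qed

end
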